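(* Let $W$ be a stopping time in $\mathcal{T}$ and let $0<\rho<1$. If $Cap_{\mathcal{T}}W\le(1-\rho)^2/4$, then $Cap_{\mathcal{T}}\big(\widehat{W_{\mathcal{T}}^{\rho}},W\big)\le\frac{4}{(1-\rho)^2}Cap_{\mathcal{T}}W$.
   Context: Tree. $\mathcal{T}$ is the rooted dyadic tree whose vertices are the dyadic arcs of the unit circle. The root $o$ is the whole circle. The vertices at level $n\ge0$ are the arcs $\{e^{it}:2\pi j2^{-n}\le t<2\pi(j+1)2^{-n}\}$ for $0\le j<2^n$. Each vertex $x$ has two children, which are the two arcs at the next level contained in it. Write $y\le x$ if $x$ lies in the subtree rooted at $y$, and $y<x$ if moreover $y\ne x$. $[o,x]=\{y:y\le x\}$ and $S(x)=\{y:y\ge x\}$. A stopping time is a set of pairwise incomparable vertices. $\mathcal{G}(\{o\},W)$ is the union of the geodesics $[o,w]$, $w\in W$. Capacity. For $f:\mathcal{T}\to\mathbb{R}$ put $If(x)=\sum_{y\in[o,x]}f(y)$, and define $Cap_{\mathcal{T}}(W)=\inf\{\|f\|^2_{\ell^2(\mathcal{T})}:If\ge1\text{ on }W\}$. For stopping times $E,F$, the condenser capacity is $Cap_{\mathcal{T}}(E,F)=\inf\{\|f\|_{\ell^2(\mathcal{T})}^2: If\ge1\text{ on }F,\ \operatorname{supp}f\subset\bigcup_{e\in E}S(e)\}$. Capacitary blowup. For a stopping time $W$ there is a unique minimizer $h$ of $Cap_{\mathcal{T}}(W)$; set $H=Ih$, so $H=1$ on $W$ and $\|h\|^2=Cap_{\mathcal{T}}W$.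 For $0<\rho<1$, the capacitary blowup is $\widehat{W_{\mathcal{T}}^{\rho}}=\{t\in\mathcal{G}(\{o\},W):H(t)\ge\rho\text{ and }H(x)\le\rho\text{ for all }x<t\}$. *)

theory Defs
  imports "HOL-Analysis.Analysis"
begin

text \<open>The rooted dyadic tree: a vertex (dyadic arc) at level n is encoded by the
  binary word of length n (bool list) describing the successive choices of halves;
  the root o is the empty word, the two children of x are x @ [False] and x @ [True].
  The tree order y \<le> x (x lies in the subtree rooted at y) is the prefix order.\<close>

type_synonym vertex = "bool list"

definition tle :: "vertex \<Rightarrow> vertex \<Rightarrow> bool" where
  "tle y x \<longleftrightarrow> (\<exists>z. x = y @ z)"

definition tless :: "vertex \<Rightarrow> vertex \<Rightarrow> bool" where
  "tless y x \<longleftrightarrow> tle y x \<and> y \<noteq> x"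

definition geod :: "vertex \<Rightarrow> vertex set" where
  "geod x = {y. tle y x}"

definition subtree :: "vertex \<Rightarrow> vertex set" where
  "subtree x = {y. tle x y}"

definition stopping_time :: "vertex set \<Rightarrow> bool" where
  "stopping_time W \<longleftrightarrow> (\<forall>x\<in>W. \<forall>y\<in>W. tle x y \<longrightarrow> x = y)"

definition geodesic_union :: "vertex set \<Rightarrow> vertex set" where
  "geodesic_union W = (\<Union>w\<in>W. geod w)"

definition Iop :: "(vertex \<Rightarrow> real) \<Rightarrow> vertex \<Rightarrow> real" where
  "Iop f x = (\<Sum>y\<in>geod x. f y)"

definition in_l2 :: "(vertex \<Rightarrow> real) \<Rightarrow> bool" where
  "in_l2 f \<longleftrightarrow> (\<lambda>x. (f x)\<^sup>2) summable_on UNIV"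

definition norm2 :: "(vertex \<Rightarrow> real) \<Rightarrow> real" where
  "norm2 f = infsum (\<lambda>x. (f x)\<^sup>2) UNIV"

definition cap_admissible :: "vertex set \<Rightarrow> (vertex \<Rightarrow> real) \<Rightarrow> bool" where
  "cap_admissible W f \<longleftrightarrow> in_l2 f \<and> (\<forall>w\<in>W. Iop f w \<ge> 1)"

text \<open>Capacity (infimum in the extended reals; the infimum of the empty set is \<infinity>).\<close>
definition Cap :: "vertex set \<Rightarrow> ereal" where
  "Cap W = (INF f \<in> {f. cap_admissible W f}. ereal (norm2 f))"

definition condCap :: "vertex set \<Rightarrow> vertex set \<Rightarrow> ereal" where
  "condCap E F = (INF f \<in> {f. in_l2 f \<and> (\<forall>w\<in>F. Iop f w \<ge> 1)
                              \<and> {x. f x \<noteq> 0} \<subseteq> (\<Union>e\<in>E. subtree e)}. ereal (norm2 f))"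

definition cap_minimizer :: "vertex set \<Rightarrow> vertex \<Rightarrow> real" where
  "cap_minimizer W = (THE h. cap_admissible W h \<and> ereal (norm2 h) = Cap W)"

definition cap_potential :: "vertex set \<Rightarrow> vertex \<Rightarrow> real" where
  "cap_potential W = Iop (cap_minimizer W)"

definition cap_blowup :: "vertex set \<Rightarrow> real \<Rightarrow> vertex set" where
  "cap_blowup W \<rho> = {t \<in> geodesic_union W. cap_potential W t \<ge> \<rho>
                       \<and> (\<forall>x. tless x t \<longrightarrow> cap_potential W x \<le> \<rho>)}"

end

theory Submission
  imports Defs
begin


lemma tle_take_iff: "tle y x \<longleftrightarrow> length y \<le> length x \<and> y = take (length y) x"
  unfolding tle_def
  by (metis append_eq_conv_conj append_take_drop_id le_add1 length_append)

lemma tle_takes: "k \<le> j \<Longrightarrow> tle (take k x) (take j x)"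
  unfolding tle_take_iff by (simp add: min_def)

lemma geod_take: "geod x = (\<lambda>k. take k x) ` {..length x}"
  unfolding geod_def
  by (auto simp: tle_take_iff intro!: image_eqI)

lemma finite_geod: "finite (geod x)"
  by (simp add: geod_take)

lemma Iop_take: "Iop g x = (\<Sum>k\<le>length x. g (take k x))"
proof -
  have "inj_on (\<lambda>k. take k x) {..length x}"
    by (rule inj_onI) (metis atMost_iff length_take min.absorb2)
  then show ?thesis unfolding Iop_def geod_take by (simp add: sum.reindex)
qed

lemma summable_dom:
  fixes f g :: "vertex \<Rightarrow> real"
  assumes "g summable_on UNIV" "\<And>x. 0 \<le> f x" "\<And>x. f x \<le> g x"
  shows "f summable_on UNIV"
proof (rule nonneg_bdd_above_summable_on)
  show "bdd_above (sum f ` {F. F \<subseteq> UNIV \<and> finite F})"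
  proof (rule bdd_aboveI2)
    fix F :: "vertex set" assume "F \<in> {F. F \<subseteq> UNIV \<and> finite F}"
    then have "sum f F \<le> sum g F" "sum g F \<le> infsum g UNIV"
      using assms by (auto intro!: sum_mono finite_sum_le_infsum order_trans[OF assms(2) assms(3)])
    then show "sum f F \<le> infsum g UNIV" by linarith
  qed
qed (use assms in auto)

lemma norm2_nonneg: "0 \<le> norm2 f"
  unfolding norm2_def by (simp add: infsum_nonneg)

lemma finsum_le_norm2: "in_l2 f \<Longrightarrow> finite F \<Longrightarrow> (\<Sum>x\<in>F. (f x)\<^sup>2) \<le> norm2 f"
  unfolding norm2_def in_l2_def by (rule finite_sum_le_infsum) auto

lemma point_le_norm2: "in_l2 f \<Longrightarrow> (f x)\<^sup>2 \<le> norm2 f"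
  using finsum_le_norm2[of f "{x}"] by simp

lemma half_sq_le: "((a + b) / 2)\<^sup>2 \<le> ((a::real)\<^sup>2 + b\<^sup>2) / 2"
  "((a - b) / 2)\<^sup>2 \<le> ((a::real)\<^sup>2 + b\<^sup>2) / 2"
proof -
  have "0 \<le> (a - b)\<^sup>2" "0 \<le> (a + b)\<^sup>2" by simp_all
  then show "((a + b) / 2)\<^sup>2 \<le> (a\<^sup>2 + b\<^sup>2) / 2" "((a - b) / 2)\<^sup>2 \<le> (a\<^sup>2 + b\<^sup>2) / 2"
    by (simp_all add: power2_eq_square field_simps)
qed

lemma l2_half:
  assumes "in_l2 f" "in_l2 g"
  shows "in_l2 (\<lambda>x. (f x + g x) / 2)" "in_l2 (\<lambda>x. (f x - g x) / 2)"
proof -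
  have s: "(\<lambda>x. ((f x)\<^sup>2 + (g x)\<^sup>2) * (1/2)) summable_on UNIV"
    using assms unfolding in_l2_def
    by (intro summable_on_add summable_on_cmult_left)
  show "in_l2 (\<lambda>x. (f x + g x) / 2)"
    unfolding in_l2_def by (rule summable_dom[OF s]) (use half_sq_le in auto)
  show "in_l2 (\<lambda>x. (f x - g x) / 2)"
    unfolding in_l2_def by (rule summable_dom[OF s]) (use half_sq_le in auto)
qed

lemma parallelogram:
  assumes "in_l2 f" "in_l2 g"
  shows "norm2 f + norm2 g = 2 * norm2 (\<lambda>x. (f x + g x) / 2) + 2 * norm2 (\<lambda>x. (f x - g x) / 2)"
proof -
  have eq: "(\<lambda>x. (f x)\<^sup>2 + (g x)\<^sup>2) = (\<lambda>x. 2 * ((f x + g x) / 2)\<^sup>2 + 2 * ((f x - g x) / 2)\<^sup>2)"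
    by (rule ext) (simp add: power2_eq_square field_simps)
  have a: "(\<lambda>x. ((f x + g x) / 2)\<^sup>2) summable_on UNIV" "(\<lambda>x. ((f x - g x) / 2)\<^sup>2) summable_on UNIV"
    using l2_half[OF assms] unfolding in_l2_def by auto
  have "norm2 f + norm2 g = infsum (\<lambda>x. (f x)\<^sup>2 + (g x)\<^sup>2) UNIV"
    using assms unfolding norm2_def in_l2_def by (simp add: infsum_add)
  also have "\<dots> = infsum (\<lambda>x. 2 * ((f x + g x) / 2)\<^sup>2) UNIV + infsum (\<lambda>x. 2 * ((f x - g x) / 2)\<^sup>2) UNIV"
    unfolding eq using a by (intro infsum_add summable_on_cmult_right)
  also have "\<dots> = 2 * norm2 (\<lambda>x. (f x + g x) / 2) + 2 * norm2 (\<lambda>x. (f x - g x) / 2)"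
    unfolding norm2_def using a by (simp add: infsum_cmult_right)
  finally show ?thesis .
qed



definition e0 :: "vertex \<Rightarrow> real" where "e0 x = (if x = [] then 1 else 0)"

lemma e0_adm: "cap_admissible W e0"
proof -
  have "in_l2 e0" unfolding in_l2_def
  proof (rule nonneg_bdd_above_summable_on)
    show "bdd_above (sum (\<lambda>x. (e0 x)\<^sup>2) ` {F. F \<subseteq> UNIV \<and> finite F})"
    proof (rule bdd_aboveI2)
      fix F :: "vertex set" assume "F \<in> {F. F \<subseteq> UNIV \<and> finite F}"
      have "(\<Sum>x\<in>F. (e0 x)\<^sup>2) = sum e0 F" by (rule sum.cong) (simp_all add: e0_def)
      moreover have "sum e0 F \<le> 1" using \<open>F \<in> _\<close> by (simp add: e0_def sum.delta)
      ultimately show "(\<Sum>x\<in>F. (e0 x)\<^sup>2) \<le> 1" by simp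
    qed
  qed simp
  moreover have "Iop e0 w = 1" for w
    unfolding Iop_def e0_def using finite_geod[of w]
    by (simp add: geod_def tle_def)
  ultimately show ?thesis unfolding cap_admissible_def by simp
qed

lemma adm_avg:
  assumes "cap_admissible W f" "cap_admissible W g"
  shows "cap_admissible W (\<lambda>x. (f x + g x) / 2)"
proof -
  have e: "Iop (\<lambda>x. (f x + g x) / 2) w = (Iop f w + Iop g w) / 2" for w
    unfolding Iop_def by (simp add: sum.distrib sum_divide_distrib[symmetric])
  have "in_l2 (\<lambda>x. (f x + g x) / 2)" using assms l2_half unfolding cap_admissible_def by auto
  moreover have "1 \<le> Iop (\<lambda>x. (f x + g x) / 2) w" if "w \<in> W" for w
  proof -
    have "1 \<le> Iop f w" "1 \<le> Iop g w" using assms that unfolding cap_admissible_def by auto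
    then show ?thesis unfolding e by simp
  qed
  ultimately show ?thesis unfolding cap_admissible_def by auto
qed

definition capK :: "vertex set \<Rightarrow> real" where
  "capK W = Inf (norm2 ` {f. cap_admissible W f})"

lemma capK_bdd: "bdd_below (norm2 ` {f. cap_admissible W f})"
  by (rule bdd_belowI2[of _ 0]) (simp add: norm2_nonneg)

lemma capK_ne: "norm2 ` {f. cap_admissible W f} \<noteq> {}"
  using e0_adm by auto

lemma capK_le: "cap_admissible W f \<Longrightarrow> capK W \<le> norm2 f"
  unfolding capK_def by (rule cInf_lower) (auto intro: capK_bdd)

lemma capK_nonneg: "0 \<le> capK W"
  unfolding capK_def by (rule cInf_greatest[OF capK_ne]) (auto simp: norm2_nonneg)

lemma Cap_eq: "Cap W = ereal (capK W)"
  unfolding Cap_def capK_def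
  by (subst ereal_Inf'[OF capK_bdd capK_ne]) (simp add: image_comp)

lemma minimizer_exists: "\<exists>h. cap_admissible W h \<and> norm2 h = capK W"
proof -
  define c where "c = capK W"
  have "\<exists>f. cap_admissible W f \<and> norm2 f < c + inverse (real (Suc n))" for n
  proof -
    have "Inf (norm2 ` {f. cap_admissible W f}) < c + inverse (real (Suc n))"
      unfolding c_def capK_def by simp
    from cInf_lessD[OF capK_ne this] show ?thesis by auto
  qed
  then obtain F where F: "\<And>n. cap_admissible W (F n)" "\<And>n. norm2 (F n) < c + inverse (real (Suc n))"
    by metis
  have l2F: "in_l2 (F n)" for n using F(1) unfolding cap_admissible_def by auto
  have cF: "c \<le> norm2 (F n)" for n using capK_le[OF F(1)] c_def by simp
  have diff: "(F n x - F m x)\<^sup>2 \<le> 2 * inverse (real (Suc n)) + 2 * inverse (real (Suc m))" for n m x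
  proof -
    have p: "norm2 (F n) + norm2 (F m) = 2 * norm2 (\<lambda>x. (F n x + F m x) / 2) + 2 * norm2 (\<lambda>x. (F n x - F m x) / 2)"
      by (rule parallelogram[OF l2F l2F])
    have "c \<le> norm2 (\<lambda>x. (F n x + F m x) / 2)"
      unfolding c_def by (rule capK_le[OF adm_avg[OF F(1) F(1)]])
    moreover have "((F n x - F m x) / 2)\<^sup>2 \<le> norm2 (\<lambda>x. (F n x - F m x) / 2)"
      using point_le_norm2[OF l2_half(2)[OF l2F l2F]] .
    moreover have "(F n x - F m x)\<^sup>2 = 4 * ((F n x - F m x) / 2)\<^sup>2"
      by (simp add: power2_eq_square field_simps)
    ultimately show ?thesis using p F(2)[of n] F(2)[of m] by linarith
  qed
  have conv: "convergent (\<lambda>n. F n x)" for x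
  proof -
    have "Cauchy (\<lambda>n. F n x)"
    proof (rule metric_CauchyI)
      fix e :: real assume "0 < e"
      then have "0 < e\<^sup>2 / 4" by simp
      from reals_Archimedean[OF this] obtain M where M: "inverse (real (Suc M)) < e\<^sup>2 / 4" by auto
      show "\<exists>M. \<forall>m\<ge>M. \<forall>n\<ge>M. dist (F m x) (F n x) < e"
      proof (intro exI allI impI)
        fix m n assume "M \<le> m" "M \<le> n"
        then have "inverse (real (Suc m)) \<le> inverse (real (Suc M))" "inverse (real (Suc n)) \<le> inverse (real (Suc M))"
          by (auto intro!: le_imp_inverse_le)
        then have "(F m x - F n x)\<^sup>2 < e\<^sup>2" using diff[of m x n] M by linarith
        then have "\<bar>F m x - F n x\<bar>\<^sup>2 < e\<^sup>2" by simp
        then have "\<bar>F m x - F n x\<bar> < e" using \<open>0 < e\<close> by (meson less_imp_le power_less_imp_less_base)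
        then show "dist (F m x) (F n x) < e" by (simp add: dist_real_def)
      qed
    qed
    then show ?thesis by (simp add: Cauchy_convergent_iff)
  qed
  define h where "h x = lim (\<lambda>n. F n x)" for x
  have lim: "(\<lambda>n. F n x) \<longlonglongrightarrow> h x" for x
    unfolding h_def using conv convergent_LIMSEQ_iff by blast
  have cinv: "(\<lambda>n. c + inverse (real (Suc n))) \<longlonglongrightarrow> c"
    using tendsto_add[OF tendsto_const LIMSEQ_inverse_real_of_nat, of c] by simp
  have fs: "(\<Sum>x\<in>S. (h x)\<^sup>2) \<le> c" if "finite S" for S
  proof (rule LIMSEQ_le)
    show "(\<lambda>n. \<Sum>x\<in>S. (F n x)\<^sup>2) \<longlonglongrightarrow> (\<Sum>x\<in>S. (h x)\<^sup>2)"
      by (intro tendsto_sum tendsto_power lim)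
    show "(\<lambda>n. c + inverse (real (Suc n))) \<longlonglongrightarrow> c" by (rule cinv)
    show "\<exists>N. \<forall>n\<ge>N. (\<Sum>x\<in>S. (F n x)\<^sup>2) \<le> c + inverse (real (Suc n))"
      using finsum_le_norm2[OF l2F that] F(2) by (meson less_imp_le order_trans)
  qed
  have l2h: "in_l2 h" unfolding in_l2_def
    by (rule nonneg_bdd_above_summable_on) (auto intro!: bdd_aboveI2[of _ _ c] fs)
  have "norm2 h \<le> c" unfolding norm2_def
    using l2h unfolding in_l2_def by (rule infsum_le_finite_sums) (rule fs)
  moreover have "1 \<le> Iop h w" if "w \<in> W" for w
  proof (rule LIMSEQ_le_const)
    show "(\<lambda>n. Iop (F n) w) \<longlonglongrightarrow> Iop h w"
      unfolding Iop_def by (intro tendsto_sum lim)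
    show "\<exists>N. \<forall>n\<ge>N. 1 \<le> Iop (F n) w"
      using F(1) that unfolding cap_admissible_def by auto
  qed
  ultimately have adm: "cap_admissible W h" and le: "norm2 h \<le> c"
    using l2h unfolding cap_admissible_def by auto
  have "c \<le> norm2 h" using capK_le[OF adm] c_def by simp
  then show ?thesis using c_def adm le by auto
qed

lemma minimizer_unique:
  assumes "cap_admissible W f" "norm2 f = capK W" "cap_admissible W g" "norm2 g = capK W"
  shows "f = g"
proof
  fix x
  have l2: "in_l2 f" "in_l2 g" using assms unfolding cap_admissible_def by auto
  have p: "norm2 f + norm2 g = 2 * norm2 (\<lambda>x. (f x + g x) / 2) + 2 * norm2 (\<lambda>x. (f x - g x) / 2)"
    by (rule parallelogram[OF l2])
  have "capK W \<le> norm2 (\<lambda>x. (f x + g x) / 2)"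
    by (rule capK_le[OF adm_avg[OF assms(1) assms(3)]])
  moreover have "((f x - g x) / 2)\<^sup>2 \<le> norm2 (\<lambda>x. (f x - g x) / 2)"
    using point_le_norm2[OF l2_half(2)[OF l2]] .
  ultimately have "((f x - g x) / 2)\<^sup>2 \<le> 0" using p assms(2,4) by linarith
  then show "f x = g x" by simp
qed

lemma cap_minimizer_props:
  "cap_admissible W (cap_minimizer W) \<and> norm2 (cap_minimizer W) = capK W"
proof -
  obtain h where h: "cap_admissible W h" "norm2 h = capK W" using minimizer_exists by blast
  have "cap_minimizer W = h" unfolding cap_minimizer_def Cap_eq
    by (rule the_equality) (use h minimizer_unique in auto)
  then show ?thesis using h by simp
qed



lemma sum_split_at:
  fixes g :: "nat \<Rightarrow> real"
  assumes "k0 \<le> n"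
  shows "(\<Sum>k\<le>n. g k) = (\<Sum>k<k0. g k) + (\<Sum>k\<in>{k0..n}. g k)"
proof -
  have "{..n} = {..<k0} \<union> {k0..n}" using assms by auto
  then show ?thesis by (simp add: sum.union_disjoint ivl_disj_int)
qed

lemma take_take_le: "i \<le> k \<Longrightarrow> take i (take k w) = take i w"
  by (simp add: min_def)

theorem mainTheorem4:
  fixes W :: "vertex set" and \<rho> :: real
  assumes "stopping_time W" and "0 < \<rho>" and "\<rho> < 1"
    and "Cap W \<le> ereal ((1 - \<rho>)\<^sup>2 / 4)"
  shows "condCap (cap_blowup W \<rho>) W \<le> ereal (4 / (1 - \<rho>)\<^sup>2) * Cap W"
proof -
  define h where "h = cap_minimizer W"
  define c where "c = capK W"
  define E where "E = cap_blowup W \<rho>"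
  define U where "U = (\<Union>e\<in>E. subtree e)"
  define f where "f x = (if x \<in> U then h x / (1 - \<rho>) else 0)" for x
  have hadm: "cap_admissible W h" and hn: "norm2 h = c"
    using cap_minimizer_props[of W] unfolding h_def c_def by auto
  have Hdef: "cap_potential W x = Iop h x" for x unfolding cap_potential_def h_def ..
  have rpos: "0 < 1 - \<rho>" using assms by simp
  have Htake: "Iop h (take k w) = (\<Sum>i\<le>k. h (take i w))" if "k \<le> length w" for k w
    unfolding Iop_take using that by (simp add: min_def)
  have key: "1 \<le> Iop f w" if wW: "w \<in> W" for w
  proof -
    define n where "n = length w"
    have Hw: "1 \<le> Iop h w" using hadm wW unfolding cap_admissible_def by auto
    define P where "P k = (\<rho> \<le> Iop h (take k w))" for k
    have Pn: "P n" unfolding P_def n_def using Hw assms by simp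
    define k0 where "k0 = (LEAST k. P k)"
    have k0n: "k0 \<le> n" unfolding k0_def by (rule Least_le[of P, OF Pn])
    have Pk0: "P k0" unfolding k0_def by (rule LeastI[of P, OF Pn])
    have Hlt: "Iop h (take j w) < \<rho>" if "j < k0" for j
      using not_less_Least[OF that[unfolded k0_def]] unfolding P_def by simp
    have tE: "take k0 w \<in> E"
    proof -
      have "take k0 w \<in> geod w" unfolding geod_def using tle_takes[of k0 n w] k0n n_def by simp
      then have "take k0 w \<in> geodesic_union W" unfolding geodesic_union_def using wW by auto
      moreover have "cap_potential W x \<le> \<rho>" if "tless x (take k0 w)" for x
      proof -
        have l: "length x \<le> k0" "x = take (length x) (take k0 w)" "x \<noteq> take k0 w"
          using that k0n n_def unfolding tless_def tle_take_iff by auto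
        then have "length x \<noteq> k0" using k0n n_def by (metis take_all_iff length_take min.absorb1 take_take)
        then have "length x < k0" using l by simp
        moreover have "x = take (length x) w" using l take_take_le by metis
        ultimately show ?thesis using Hlt Hdef by (metis less_imp_le)
      qed
      ultimately show ?thesis unfolding E_def cap_blowup_def using Pk0 Hdef P_def by auto
    qed
    have memU: "take k w \<in> U \<longleftrightarrow> k0 \<le> k" if "k \<le> n" for k
    proof
      assume "k0 \<le> k"
      then show "take k w \<in> U" unfolding U_def subtree_def using tE tle_takes by blast
    next
      assume "take k w \<in> U"
      then obtain e where e: "e \<in> E" "tle e (take k w)" unfolding U_def subtree_def by auto
      then have le: "length e \<le> k" "e = take (length e) w"
        using that n_def unfolding tle_take_iff by (auto simp: min_def split: if_splits)
      have "\<rho> \<le> Iop h e" using e(1) Hdef unfolding E_def cap_blowup_def by auto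
      then have "\<not> length e < k0" using Hlt le by (metis not_less)
      then show "k0 \<le> k" using le by simp
    qed
    have "Iop f w = (\<Sum>k\<le>n. f (take k w))" unfolding Iop_take n_def ..
    also have "\<dots> = (\<Sum>k<k0. f (take k w)) + (\<Sum>k\<in>{k0..n}. f (take k w))"
      by (rule sum_split_at[OF k0n])
    also have "(\<Sum>k<k0. f (take k w)) = 0"
      using memU k0n unfolding f_def by (intro sum.neutral) auto
    also have "(\<Sum>k\<in>{k0..n}. f (take k w)) = (\<Sum>k\<in>{k0..n}. h (take k w)) / (1 - \<rho>)"
      unfolding sum_divide_distrib using memU unfolding f_def by (intro sum.cong) auto
    finally have If: "Iop f w = (\<Sum>k\<in>{k0..n}. h (take k w)) / (1 - \<rho>)" by simp
    have rest: "(\<Sum>k<k0. h (take k w)) \<le> \<rho>"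
    proof (cases k0)
      case 0 then show ?thesis using assms by simp
    next
      case (Suc p)
      then have "(\<Sum>k<k0. h (take k w)) = Iop h (take p w)"
        using Htake[of p w] k0n n_def by (simp add: lessThan_Suc_atMost)
      then show ?thesis using Hlt[of p] Suc by simp
    qed
    have "Iop h w = (\<Sum>k\<le>n. h (take k w))" unfolding Iop_take n_def ..
    also have "\<dots> = (\<Sum>k<k0. h (take k w)) + (\<Sum>k\<in>{k0..n}. h (take k w))"
      by (rule sum_split_at[OF k0n])
    finally have "1 - \<rho> \<le> (\<Sum>k\<in>{k0..n}. h (take k w))" using Hw rest by linarith
    then show ?thesis unfolding If using rpos by simp
  qed
  have l2h: "(\<lambda>x. (h x)\<^sup>2) summable_on UNIV" using hadm unfolding cap_admissible_def in_l2_def by simp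
  have gs: "(\<lambda>x. (h x)\<^sup>2 * (1 / (1 - \<rho>)\<^sup>2)) summable_on UNIV"
    by (rule summable_on_cmult_left[OF l2h])
  have fle: "(f x)\<^sup>2 \<le> (h x)\<^sup>2 * (1 / (1 - \<rho>)\<^sup>2)" for x
    unfolding f_def by (simp add: power_divide)
  have fs: "(\<lambda>x. (f x)\<^sup>2) summable_on UNIV"
    by (rule summable_dom[OF gs], simp, rule fle)
  have "norm2 f \<le> infsum (\<lambda>x. (h x)\<^sup>2 * (1 / (1 - \<rho>)\<^sup>2)) UNIV"
    unfolding norm2_def by (rule infsum_mono[OF fs gs fle])
  also have "\<dots> = c * (1 / (1 - \<rho>)\<^sup>2)"
    using hn infsum_cmult_left[of "1 / (1 - \<rho>)\<^sup>2" "\<lambda>x. (h x)\<^sup>2" UNIV] l2h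
    unfolding norm2_def by simp
  finally have nf: "norm2 f \<le> c / (1 - \<rho>)\<^sup>2" by simp
  have fadm: "f \<in> {f. in_l2 f \<and> (\<forall>w\<in>W. Iop f w \<ge> 1) \<and> {x. f x \<noteq> 0} \<subseteq> (\<Union>e\<in>E. subtree e)}"
    using fs key unfolding in_l2_def f_def U_def by auto
  have "condCap E W \<le> ereal (norm2 f)"
    unfolding condCap_def by (rule INF_lower[OF fadm])
  also have "\<dots> \<le> ereal (4 / (1 - \<rho>)\<^sup>2 * c)"
  proof -
    have "0 \<le> c" unfolding c_def by (rule capK_nonneg)
    then have "c / (1 - \<rho>)\<^sup>2 \<le> 4 / (1 - \<rho>)\<^sup>2 * c" using rpos by (simp add: field_simps)
    then show ?thesis using nf by simp
  qed
  also have "\<dots> = ereal (4 / (1 - \<rho>)\<^sup>2) * Cap W" unfolding Cap_eq c_def by simp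
  finally show ?thesis unfolding E_def .
qed

end
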